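(* Let $\mathcal{X}\subseteq\mathbb{R}^d$, let $k$ be a positive definite kernel on $\mathcal{X}$ with RKHS $H_k$, and let $f\in H_k$ with $\|f\|_{H_k}\le B$ for some $B>0$. Let $\lambda>0$, $n\ge1$, let $x_1,\dots,x_n\in\mathcal{X}$ and observations $y_i=f(x_i)+\epsilon_i$, where $\epsilon_1,\dots,\epsilon_n$ are i.i.d. zero-mean real random variables such that, for some $h_0>0$ and $\xi_0>0$, $\mathbb{E}[e^{h\epsilon_i}]\le\exp(h^2\xi_0/2)$ for all $|h|\le h_0$; assume $X_n=[x_1,\dots,x_n]^\top$ is independent of $E_n=[\epsilon_1,\dots,\epsilon_n]^\top$. Let $\mu_n,\sigma_n$ be as below. For $\delta\in(0,1)$ set $$\beta(\delta)=\frac{1}{\lambda}\sqrt{2\left(\xi_0\vee\frac{2\log(1/\delta)}{h_0^2}\right)\log(1/\delta)},$$ where $a\vee b=\max(a,b)$. Then for every fixed $x\in\mathcal{X}$, $$\Pr\big[f(x)\le \mu_n(x)+(B+\beta(\delta))\sigma_n(x)\big]\ge 1-\delta\quad\text{and}\quad \Pr\big[f(x)\ge \mu_n(x)-(B+\beta(\delta))\sigma_n(x)\big]\ge 1-\delta.$$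
   Context: $\mu_n(x)=k(x,X_n)^\top(k(X_n,X_n)+\lambda^2I_n)^{-1}Y_n$ with $Y_n=[y_1,\dots,y_n]^\top$, and $\sigma_n^2(x)=k(x,x)-k(x,X_n)^\top(k(X_n,X_n)+\lambda^2I_n)^{-1}k(x,X_n)$, where $k(x,X_n)=[k(x,x_1),\dots,k(x,x_n)]^\top$, $k(X_n,X_n)=[k(x_i,x_j)]_{i,j=1}^n$, $I_n$ the identity. *)

theory Defs
  imports "HOL-Analysis.Analysis" "HOL-Probability.Probability"
begin

definition pd_kernel :: "'x set \<Rightarrow> ('x \<Rightarrow> 'x \<Rightarrow> real) \<Rightarrow> bool" where
  "pd_kernel X k \<longleftrightarrow>
     (\<forall>x\<in>X. \<forall>y\<in>X. k x y = k y x) \<and>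
     (\<forall>(m::nat) (z::nat \<Rightarrow> 'x) (a::nat \<Rightarrow> real). (\<forall>i<m. z i \<in> X) \<longrightarrow>
        0 \<le> (\<Sum>i<m. \<Sum>j<m. a i * a j * k (z i) (z j)))"

text \<open>Pre-RKHS: finite combinations sum_z alpha(z) k(z,.) with centres in X.\<close>
definition supp_coef :: "('x \<Rightarrow> real) \<Rightarrow> 'x set" where
  "supp_coef \<alpha> = {z. \<alpha> z \<noteq> 0}"

definition fin_coef :: "'x set \<Rightarrow> ('x \<Rightarrow> real) \<Rightarrow> bool" where
  "fin_coef X \<alpha> \<longleftrightarrow> finite (supp_coef \<alpha>) \<and> supp_coef \<alpha> \<subseteq> X"

definition pre_fun :: "('x \<Rightarrow> 'x \<Rightarrow> real) \<Rightarrow> ('x \<Rightarrow> real) \<Rightarrow> 'x \<Rightarrow> real" where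
  "pre_fun k \<alpha> x = (\<Sum>z\<in>supp_coef \<alpha>. \<alpha> z * k z x)"

definition pre_sqnorm :: "('x \<Rightarrow> 'x \<Rightarrow> real) \<Rightarrow> ('x \<Rightarrow> real) \<Rightarrow> real" where
  "pre_sqnorm k \<alpha> = (\<Sum>z\<in>supp_coef \<alpha>. \<Sum>w\<in>supp_coef \<alpha>. \<alpha> z * \<alpha> w * k z w)"

text \<open>Moore--Aronszajn construction of H_k: f is in H_k with norm at most B iff f is the
  pointwise limit on X of a Cauchy sequence (in the pre-RKHS norm) of finite combinations,
  and the limit of their norms (= the RKHS norm of f) is at most B.\<close>
definition in_rkhs_ball :: "'x set \<Rightarrow> ('x \<Rightarrow> 'x \<Rightarrow> real) \<Rightarrow> ('x \<Rightarrow> real) \<Rightarrow> real \<Rightarrow> bool" where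
  "in_rkhs_ball X k f B \<longleftrightarrow>
     (\<exists>\<alpha>::nat \<Rightarrow> 'x \<Rightarrow> real.
        (\<forall>j. fin_coef X (\<alpha> j)) \<and>
        (\<forall>e>0. \<exists>N. \<forall>p\<ge>N. \<forall>q\<ge>N. pre_sqnorm k (\<alpha> p - \<alpha> q) < e) \<and>
        (\<forall>x\<in>X. (\<lambda>j. pre_fun k (\<alpha> j) x) \<longlonglongrightarrow> f x) \<and>
        (\<exists>L. (\<lambda>j. sqrt (pre_sqnorm k (\<alpha> j))) \<longlonglongrightarrow> L \<and> L \<le> B))"

text \<open>GP posterior mean and variance; samples indexed by a finite type 'n (n = CARD('n)).\<close>
definition gram :: "('x \<Rightarrow> 'x \<Rightarrow> real) \<Rightarrow> ('n::finite \<Rightarrow> 'x) \<Rightarrow> real^'n^'n" where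
  "gram k Xn = (\<chi> i j. k (Xn i) (Xn j))"

definition kvec :: "('x \<Rightarrow> 'x \<Rightarrow> real) \<Rightarrow> ('n::finite \<Rightarrow> 'x) \<Rightarrow> 'x \<Rightarrow> real^'n" where
  "kvec k Xn x = (\<chi> i. k x (Xn i))"

definition gp_mean :: "('x \<Rightarrow> 'x \<Rightarrow> real) \<Rightarrow> real \<Rightarrow> ('n::finite \<Rightarrow> 'x) \<Rightarrow> real^'n \<Rightarrow> 'x \<Rightarrow> real" where
  "gp_mean k lam Xn Y x =
     kvec k Xn x \<bullet> (matrix_inv (gram k Xn + (lam^2) *\<^sub>R mat 1) *v Y)"

definition gp_var :: "('x \<Rightarrow> 'x \<Rightarrow> real) \<Rightarrow> real \<Rightarrow> ('n::finite \<Rightarrow> 'x) \<Rightarrow> 'x \<Rightarrow> real" where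
  "gp_var k lam Xn x =
     k x x - kvec k Xn x \<bullet> (matrix_inv (gram k Xn + (lam^2) *\<^sub>R mat 1) *v kvec k Xn x)"

definition gp_sd :: "('x \<Rightarrow> 'x \<Rightarrow> real) \<Rightarrow> real \<Rightarrow> ('n::finite \<Rightarrow> 'x) \<Rightarrow> 'x \<Rightarrow> real" where
  "gp_sd k lam Xn x = sqrt (gp_var k lam Xn x)"

definition conf_beta :: "real \<Rightarrow> real \<Rightarrow> real \<Rightarrow> real \<Rightarrow> real" where
  "conf_beta lam xi0 h0 \<delta> =
     (1 / lam) * sqrt (2 * max xi0 (2 * ln (1 / \<delta>) / h0^2) * ln (1 / \<delta>))"

end

theory Submission imports Defs begin

lemma psd_index:
  assumes kern: "pd_kernel X k" and I: "finite I" and z: "\<And>i. i \<in> I \<Longrightarrow> z i \<in> X"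
  shows "0 \<le> (\<Sum>i\<in>I. \<Sum>j\<in>I. c i * c j * k (z i) (z j))"
proof -
  obtain h where h: "bij_betw h {0..<card I} I" using ex_bij_betw_nat_finite[OF I] by blast
  have hI: "\<forall>i<card I. h i \<in> I" using bij_betwE[OF h] by auto
  have zX: "\<forall>i<card I. (z \<circ> h) i \<in> X" using hI z by auto
  have "0 \<le> (\<Sum>i<card I. \<Sum>j<card I. (c \<circ> h) i * (c \<circ> h) j * k ((z \<circ> h) i) ((z \<circ> h) j))"
    using kern zX unfolding pd_kernel_def by blast
  also have "\<dots> = (\<Sum>i\<in>I. \<Sum>j\<in>I. c i * c j * k (z i) (z j))"
  proof -
    have "(\<Sum>i<card I. \<Sum>j<card I. (c \<circ> h) i * (c \<circ> h) j * k ((z \<circ> h) i) ((z \<circ> h) j))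
        = (\<Sum>i<card I. \<Sum>j\<in>I. c (h i) * c j * k (z (h i)) (z j))"
      apply (intro sum.cong refl)
      using sum.reindex_bij_betw[OF h] by (simp add: lessThan_atLeast0)
    also have "\<dots> = (\<Sum>i\<in>I. \<Sum>j\<in>I. c i * c j * k (z i) (z j))"
      using sum.reindex_bij_betw[OF h, of "\<lambda>i. \<Sum>j\<in>I. c i * c j * k (z i) (z j)"]
      by (simp add: lessThan_atLeast0)
    finally show ?thesis .
  qed
  finally show ?thesis .
qed

lemma quad_cs:
  fixes a b c :: real
  assumes q: "\<And>t. 0 \<le> a + 2 * t * b + t^2 * c" and c: "0 \<le> c"
  shows "b^2 \<le> a * c"
proof (cases "c = 0")
  case True
  have "b = 0"
  proof (rule ccontr)
    assume "b \<noteq> 0"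
    have "0 \<le> a + 2 * (-(\<bar>a\<bar>+1)/(2*b)) * b" using q[of "-(\<bar>a\<bar>+1)/(2*b)"] True by simp
    also have "\<dots> = a - (\<bar>a\<bar>+1)" using \<open>b \<noteq> 0\<close> by (simp add: field_simps)
    finally show False by linarith
  qed
  then show ?thesis using True by simp
next
  case False
  then have cp: "c > 0" using c by simp
  have "0 \<le> a + 2 * (-b/c) * b + (-b/c)^2 * c" by (rule q)
  also have "\<dots> = a - b^2/c" using cp by (simp add: field_simps power2_eq_square)
  finally have "b^2/c \<le> a" by simp
  then show ?thesis using cp by (simp add: field_simps)
qed

definition ipS :: "('x \<Rightarrow> 'x \<Rightarrow> real) \<Rightarrow> 'x set \<Rightarrow> ('x \<Rightarrow> real) \<Rightarrow> ('x \<Rightarrow> real) \<Rightarrow> real" where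
  "ipS k S a b = (\<Sum>u\<in>S. \<Sum>w\<in>S. a u * b w * k u w)"

lemma ipS_nonneg:
  assumes "pd_kernel X k" "finite S" "S \<subseteq> X"
  shows "0 \<le> ipS k S a a"
  using psd_index[OF assms(1,2), of id a] assms(3) unfolding ipS_def by auto

lemma ipS_cs:
  assumes kern: "pd_kernel X k" and S: "finite S" "S \<subseteq> X"
  shows "\<bar>ipS k S a b\<bar> \<le> sqrt (ipS k S a a) * sqrt (ipS k S b b)"
proof -
  have sym: "\<And>u w. u \<in> S \<Longrightarrow> w \<in> S \<Longrightarrow> k u w = k w u"
    using kern S unfolding pd_kernel_def by blast
  have ba: "ipS k S b a = ipS k S a b"
    unfolding ipS_def
    apply (subst sum.swap)
    apply (intro sum.cong refl)
    using sym by (simp add: mult.commute)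
  have q: "0 \<le> ipS k S a a + 2 * t * ipS k S a b + t^2 * ipS k S b b" for t
  proof -
    have "0 \<le> ipS k S (\<lambda>u. a u + t * b u) (\<lambda>u. a u + t * b u)"
      by (rule ipS_nonneg[OF kern S])
    also have "ipS k S (\<lambda>u. a u + t * b u) (\<lambda>u. a u + t * b u)
       = ipS k S a a + t * ipS k S a b + t * ipS k S b a + t^2 * ipS k S b b"
      unfolding ipS_def
      by (simp add: algebra_simps sum.distrib sum_distrib_left power2_eq_square)
    finally show ?thesis using ba by simp
  qed
  have "(ipS k S a b)^2 \<le> ipS k S a a * ipS k S b b"
    by (rule quad_cs[OF q ipS_nonneg[OF kern S]])
  then have "sqrt ((ipS k S a b)^2) \<le> sqrt (ipS k S a a * ipS k S b b)"
    using real_sqrt_le_mono by blast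
  then show ?thesis by (simp add: real_sqrt_mult)
qed

definition gco :: "'x \<Rightarrow> ('i \<Rightarrow> real) \<Rightarrow> ('i \<Rightarrow> 'x) \<Rightarrow> 'i set \<Rightarrow> 'x \<Rightarrow> real" where
  "gco x c z I w = (if w = x then 1 else 0) - (\<Sum>i\<in>I. c i * (if w = z i then 1 else 0))"

lemma sum_delta_mult:
  assumes "finite S" "y \<in> S"
  shows "(\<Sum>w\<in>S. (if w = y then 1 else 0) * (h w::real)) = h y"
proof -
  have "(\<Sum>w\<in>S. (if w = y then 1 else 0) * h w) = (\<Sum>w\<in>S. if w = y then h w else 0)"
    by (intro sum.cong) auto
  then show ?thesis using assms by (simp add: sum.delta')
qed

lemma sum_gco:
  assumes S: "finite S" "x \<in> S" and zS: "\<And>i. i \<in> I \<Longrightarrow> z i \<in> S"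
  shows "(\<Sum>w\<in>S. gco x c z I w * h w) = h x - (\<Sum>i\<in>I. c i * h (z i))"
proof -
  have "(\<Sum>w\<in>S. gco x c z I w * h w)
      = (\<Sum>w\<in>S. (if w = x then 1 else 0) * h w) - (\<Sum>w\<in>S. \<Sum>i\<in>I. c i * ((if w = z i then 1 else 0) * h w))"
    unfolding gco_def by (simp add: algebra_simps sum_subtractf sum_distrib_left sum_distrib_right)
  also have "(\<Sum>w\<in>S. \<Sum>i\<in>I. c i * ((if w = z i then 1 else 0) * h w))
      = (\<Sum>i\<in>I. c i * (\<Sum>w\<in>S. (if w = z i then 1 else 0) * h w))"
    by (simp add: sum.swap[of _ S] sum_distrib_left)
  also have "\<dots> = (\<Sum>i\<in>I. c i * h (z i))"
    by (intro sum.cong refl) (simp add: sum_delta_mult[OF S(1) zS])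
  finally show ?thesis using sum_delta_mult[OF S] by simp
qed

definition Qf :: "('x \<Rightarrow> 'x \<Rightarrow> real) \<Rightarrow> 'x \<Rightarrow> ('i \<Rightarrow> real) \<Rightarrow> ('i \<Rightarrow> 'x) \<Rightarrow> 'i set \<Rightarrow> real" where
  "Qf k x c z I = k x x - (\<Sum>i\<in>I. c i * k x (z i))
      - (\<Sum>j\<in>I. c j * (k (z j) x - (\<Sum>i\<in>I. c i * k (z j) (z i))))"

lemma ipS_gco_gco:
  assumes S: "finite S" "x \<in> S" and zS: "\<And>i. i \<in> I \<Longrightarrow> z i \<in> S"
  shows "ipS k S (gco x c z I) (gco x c z I) = Qf k x c z I"
proof -
  have "ipS k S (gco x c z I) (gco x c z I)
     = (\<Sum>u\<in>S. gco x c z I u * (\<Sum>w\<in>S. gco x c z I w * k u w))"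
    unfolding ipS_def by (simp add: sum_distrib_left mult.assoc)
  also have "\<dots> = (\<Sum>u\<in>S. gco x c z I u * (k u x - (\<Sum>i\<in>I. c i * k u (z i))))"
    by (intro sum.cong refl) (simp add: sum_gco[OF S zS])
  also have "\<dots> = Qf k x c z I"
    by (subst sum_gco[OF S zS]) (simp_all add: Qf_def)
  finally show ?thesis .
qed

lemma ipS_a_gco:
  assumes S: "finite S" "x \<in> S" and zS: "\<And>i. i \<in> I \<Longrightarrow> z i \<in> S"
  shows "ipS k S a (gco x c z I) = (\<Sum>u\<in>S. a u * k u x) - (\<Sum>i\<in>I. c i * (\<Sum>u\<in>S. a u * k u (z i)))"
proof -
  have "ipS k S a (gco x c z I) = (\<Sum>u\<in>S. a u * (\<Sum>w\<in>S. gco x c z I w * k u w))"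
    unfolding ipS_def by (simp add: sum_distrib_left mult.assoc)
  also have "\<dots> = (\<Sum>u\<in>S. a u * (k u x - (\<Sum>i\<in>I. c i * k u (z i))))"
    by (intro sum.cong refl) (simp add: sum_gco[OF S zS])
  also have "\<dots> = (\<Sum>u\<in>S. a u * k u x) - (\<Sum>i\<in>I. c i * (\<Sum>u\<in>S. a u * k u (z i)))"
    by (simp add: algebra_simps sum_subtractf sum_distrib_left sum.swap[of _ S])
  finally show ?thesis .
qed

lemma pre_fun_S:
  assumes "finite S" "supp_coef a \<subseteq> S"
  shows "pre_fun k a y = (\<Sum>u\<in>S. a u * k u y)"
  unfolding pre_fun_def
  by (rule sum.mono_neutral_left) (use assms in \<open>auto simp: supp_coef_def\<close>)

lemma pre_sqnorm_S:
  assumes "finite S" "supp_coef a \<subseteq> S"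
  shows "pre_sqnorm k a = ipS k S a a"
proof -
  have "pre_sqnorm k a = (\<Sum>u\<in>S. \<Sum>w\<in>supp_coef a. a u * a w * k u w)"
    unfolding pre_sqnorm_def
    by (rule sum.mono_neutral_left) (use assms in \<open>auto simp: supp_coef_def\<close>)
  also have "\<dots> = ipS k S a a"
    unfolding ipS_def
    by (intro sum.cong refl sum.mono_neutral_left) (use assms in \<open>auto simp: supp_coef_def\<close>)
  finally show ?thesis .
qed

lemma rkhs_bound:
  assumes kern: "pd_kernel X k" and f: "in_rkhs_ball X k f B" and x: "x \<in> X"
    and I: "finite I" and zX: "\<And>i. i \<in> I \<Longrightarrow> z i \<in> X"
  shows "\<bar>f x - (\<Sum>i\<in>I. c i * f (z i))\<bar> \<le> B * sqrt (Qf k x c z I)"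
    and "0 \<le> Qf k x c z I"
proof -
  obtain \<alpha> L where fin: "\<And>j. fin_coef X (\<alpha> j)"
    and lim: "\<And>y. y \<in> X \<Longrightarrow> (\<lambda>j. pre_fun k (\<alpha> j) y) \<longlonglongrightarrow> f y"
    and L: "(\<lambda>j. sqrt (pre_sqnorm k (\<alpha> j))) \<longlonglongrightarrow> L" "L \<le> B"
    using f unfolding in_rkhs_ball_def by blast
  define S where "S j = supp_coef (\<alpha> j) \<union> insert x (z ` I)" for j
  have Sfin: "finite (S j)" and SX: "S j \<subseteq> X" and xS: "x \<in> S j"
    and zS: "\<And>i. i \<in> I \<Longrightarrow> z i \<in> S j" and supp: "supp_coef (\<alpha> j) \<subseteq> S j" for j
    using fin[of j] I x zX unfolding S_def fin_coef_def by auto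
  have Q: "ipS k (S j) (gco x c z I) (gco x c z I) = Qf k x c z I" for j
    by (rule ipS_gco_gco[OF Sfin xS zS])
  show Q0: "0 \<le> Qf k x c z I"
    using ipS_nonneg[OF kern Sfin[of 0] SX[of 0], of "gco x c z I"] Q[of 0] by simp
  define D where "D j = pre_fun k (\<alpha> j) x - (\<Sum>i\<in>I. c i * pre_fun k (\<alpha> j) (z i))" for j
  have D: "D j = ipS k (S j) (\<alpha> j) (gco x c z I)" for j
    unfolding D_def using ipS_a_gco[OF Sfin[of j] xS[of j] zS, where k=k and a="\<alpha> j" and c=c] pre_fun_S[OF Sfin[of j] supp[of j]] by simp
  have Dle: "\<bar>D j\<bar> \<le> sqrt (pre_sqnorm k (\<alpha> j)) * sqrt (Qf k x c z I)" for j
    using ipS_cs[OF kern Sfin[of j] SX[of j], of "\<alpha> j" "gco x c z I"] D[of j] Q[of j]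
      pre_sqnorm_S[OF Sfin[of j] supp[of j], where k=k] by simp
  have Dlim: "(\<lambda>j. \<bar>D j\<bar>) \<longlonglongrightarrow> \<bar>f x - (\<Sum>i\<in>I. c i * f (z i))\<bar>"
    unfolding D_def
    by (intro tendsto_rabs tendsto_diff tendsto_sum tendsto_mult_left lim x zX)
  have Rlim: "(\<lambda>j. sqrt (pre_sqnorm k (\<alpha> j)) * sqrt (Qf k x c z I)) \<longlonglongrightarrow> L * sqrt (Qf k x c z I)"
    by (intro tendsto_mult_right L)
  have "\<bar>f x - (\<Sum>i\<in>I. c i * f (z i))\<bar> \<le> L * sqrt (Qf k x c z I)"
    by (rule LIMSEQ_le[OF Dlim Rlim]) (use Dle in auto)
  also have "\<dots> \<le> B * sqrt (Qf k x c z I)"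
    by (intro mult_right_mono L(2)) (simp add: Q0)
  finally show "\<bar>f x - (\<Sum>i\<in>I. c i * f (z i))\<bar> \<le> B * sqrt (Qf k x c z I)" .
qed


lemma inner_real_vec: "(v::real^'n) \<bullet> w = (\<Sum>i\<in>UNIV. v$i * w$i)"
  by (simp add: inner_vec_def)

lemma gram_quad: "v \<bullet> (gram k Xn *v v) = (\<Sum>i\<in>UNIV. \<Sum>j\<in>UNIV. v$i * v$j * k (Xn i) (Xn j))"
  by (simp add: inner_real_vec matrix_vector_mult_def gram_def sum_distrib_left algebra_simps)

lemma gram_psd:
  assumes "pd_kernel X k" "\<And>i. Xn i \<in> X"
  shows "0 \<le> v \<bullet> (gram k Xn *v (v::real^'n::finite))"
  unfolding gram_quad using psd_index[OF assms(1), of UNIV Xn "\<lambda>i. v$i"] assms(2) by simp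

lemma Amat_vec: "((G::real^'n::finite^'n) + (l::real) *\<^sub>R mat 1) *v v = G *v v + l *\<^sub>R v"
  by (simp add: matrix_vector_mult_add_rdistrib scaleR_matrix_vector_assoc[symmetric])

context
  fixes X :: "'x set" and k :: "'x \<Rightarrow> 'x \<Rightarrow> real" and lam :: real and Xn :: "'n::finite \<Rightarrow> 'x" and x :: 'x
  assumes kern: "pd_kernel X k" and XnX: "\<And>i. Xn i \<in> X" and xX: "x \<in> X" and lam: "lam > 0"
begin

definition "AA = gram k Xn + (lam^2) *\<^sub>R mat 1"
definition "kv = kvec k Xn x"
definition "aa = matrix_inv AA *v kv"

lemma AA_pos: "lam^2 * (v \<bullet> v) \<le> v \<bullet> (AA *v v)"
  using gram_psd[OF kern XnX, of v] unfolding AA_def Amat_vec by (simp add: inner_add_right)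

lemma AA_ker: "AA *v v = 0 \<Longrightarrow> v = 0"
proof -
  assume "AA *v v = 0"
  then have "lam^2 * (v \<bullet> v) \<le> 0" using AA_pos[of v] by simp
  then have "v \<bullet> v \<le> 0" using lam by (simp add: mult_le_0_iff)
  then have "v \<bullet> v = 0" using inner_ge_zero[of v] by linarith
  then show "v = 0" by simp
qed

lemma AA_invertible: "invertible AA"
  unfolding invertible_left_inverse matrix_left_invertible_ker using AA_ker by blast

lemma AA_det: "det AA \<noteq> 0"
  using AA_invertible invertible_det_nz by blast

lemma AA_inv: "AA ** matrix_inv AA = mat 1"
proof -
  have "\<exists>A'. AA ** A' = mat 1 \<and> A' ** AA = mat 1" using AA_invertible unfolding invertible_def .
  then show ?thesis unfolding matrix_inv_def by (rule someI2_ex) blast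
qed

lemma AA_solve: "AA *v (matrix_inv AA *v w) = w"
  by (simp add: matrix_vector_mul_assoc AA_inv)

lemma AA_sym: "transpose AA = AA"
proof -
  have "k (Xn i) (Xn j) = k (Xn j) (Xn i)" for i j using kern XnX unfolding pd_kernel_def by blast
  then show ?thesis unfolding AA_def by (simp add: vec_eq_iff transpose_def gram_def mat_def)
qed

lemma kv_eq: "AA *v aa = kv"
  unfolding aa_def by (rule AA_solve)

lemma mean_lin: "kv \<bullet> (matrix_inv AA *v w) = aa \<bullet> w"
proof -
  have "kv = aa v* AA" using kv_eq vector_transpose_matrix[of aa AA] AA_sym by simp
  then show ?thesis using dot_lmul_matrix[of aa AA "matrix_inv AA *v w"] AA_solve by simp
qed

lemma var_eq: "gp_var k lam Xn x = Qf k x (\<lambda>i. aa$i) Xn UNIV + lam^2 * (aa \<bullet> aa)"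
proof -
  have sym: "k (Xn j) x = k x (Xn j)" for j using kern XnX xX unfolding pd_kernel_def by blast
  have gv: "gp_var k lam Xn x = k x x - kv \<bullet> aa"
    unfolding gp_var_def aa_def kv_def AA_def by simp
  have s1: "(\<Sum>i\<in>UNIV. aa$i * k x (Xn i)) = aa \<bullet> kv"
    by (simp add: inner_real_vec kv_def kvec_def)
  have s2: "(\<Sum>j\<in>UNIV. aa$j * (k (Xn j) x - (\<Sum>i\<in>UNIV. aa$i * k (Xn j) (Xn i))))
      = aa \<bullet> kv - aa \<bullet> (gram k Xn *v aa)"
    unfolding gram_quad
    by (simp add: inner_real_vec kv_def kvec_def sym sum_subtractf right_diff_distrib sum_distrib_left mult.assoc)
  have s3: "aa \<bullet> (gram k Xn *v aa) + lam^2 * (aa \<bullet> aa) = aa \<bullet> kv"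
    using kv_eq unfolding AA_def Amat_vec by (metis inner_add_right inner_scaleR_right)
  show ?thesis unfolding gv Qf_def s1 s2 using s3 by (simp add: inner_commute)
qed

end

lemma sum_sq_norm: "(\<Sum>i\<in>UNIV. (c$i)^2) = (norm (c::real^'n::finite))^2"
  using dot_square_norm[of c] by (simp add: inner_real_vec power2_eq_square)

lemma chernoff_core:
  fixes M :: "'a measure" and eps :: "'n::finite \<Rightarrow> 'a \<Rightarrow> real" and c :: "real^'n"
  assumes P: "prob_space M"
    and eps_meas: "\<And>i. eps i \<in> borel_measurable M"
    and eps_indep: "prob_space.indep_vars M (\<lambda>_. borel) eps UNIV"
    and h0: "h0 > 0" and xi0: "xi0 > 0"
    and mgf_int: "\<And>i h. \<bar>h\<bar> \<le> h0 \<Longrightarrow> integrable M (\<lambda>\<omega>. exp (h * eps i \<omega>))"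
    and mgf: "\<And>i h. \<bar>h\<bar> \<le> h0 \<Longrightarrow>
                prob_space.expectation M (\<lambda>\<omega>. exp (h * eps i \<omega>)) \<le> exp (h^2 * xi0 / 2)"
    and \<delta>: "0 < \<delta>" "\<delta> < 1"
  shows "measure M {\<omega> \<in> space M. c \<bullet> (\<chi> i. eps i \<omega>) >
            sqrt (2 * max xi0 (2 * ln (1 / \<delta>) / h0^2) * ln (1 / \<delta>)) * norm c} \<le> \<delta>"
proof -
  interpret prob_space M by (rule P)
  define L where "L = ln (1 / \<delta>)"
  define \<nu> where "\<nu> = max xi0 (2 * L / h0^2)"
  have Lpos: "L > 0" unfolding L_def using \<delta> by simp
  have nupos: "\<nu> > 0" and nuxi: "xi0 \<le> \<nu>" and nuh: "2 * L / h0^2 \<le> \<nu>"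
    unfolding \<nu>_def using xi0 by auto
  show ?thesis
  proof (cases "c = 0")
    case True
    then show ?thesis using \<delta> by simp
  next
    case False
    define s where "s = norm c"
    have spos: "s > 0" using False unfolding s_def by simp
    define q where "q = sqrt (2 * L / \<nu>)"
    define h where "h = q / s"
    define t where "t = sqrt (2 * \<nu> * L) * s"
    have qpos: "q > 0" unfolding q_def using Lpos nupos by simp
    have hpos: "h > 0" unfolding h_def using qpos spos by simp
    have q2: "q^2 = 2 * L / \<nu>" unfolding q_def using Lpos nupos by simp
    have "2 * L / \<nu> \<le> h0^2"
      using nuh nupos h0 Lpos by (simp add: field_simps)
    then have qh0: "q \<le> h0" unfolding q_def using h0
      by (metis abs_of_pos real_sqrt_abs real_sqrt_le_mono)
    have hs: "h * s = q" unfolding h_def using spos by simp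
    have hci: "\<bar>h * c$i\<bar> \<le> h0" for i
    proof -
      have "\<bar>c$i\<bar> \<le> s" unfolding s_def by (rule component_le_norm_cart)
      then have "\<bar>h * c$i\<bar> \<le> h * s" using hpos by (simp add: abs_mult)
      then show ?thesis using hs qh0 by simp
    qed
    define Y where "Y i \<omega> = exp ((h * c$i) * eps i \<omega>)" for i \<omega>
    have Yeq: "Y i = (\<lambda>\<omega>. exp ((h * c$i) * eps i \<omega>))" for i by (rule ext) (simp add: Y_def)
    have Yind: "indep_vars (\<lambda>_. borel) Y UNIV"
      unfolding Y_def
      by (rule indep_vars_compose2[OF eps_indep, where Y="\<lambda>i e. exp ((h * c$i) * e)"]) simp
    have Yint: "integrable M (Y i)" for i unfolding Y_def using mgf_int[OF hci] .
    define u where "u \<omega> = (\<Prod>i\<in>UNIV. Y i \<omega>)" for \<omega>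
    have u_exp: "u \<omega> = exp (h * (c \<bullet> (\<chi> i. eps i \<omega>)))" for \<omega>
      unfolding u_def Y_def by (simp add: inner_real_vec exp_sum[symmetric] sum_distrib_left mult.assoc)
    have uint: "integrable M u" unfolding u_def
      using indep_vars_integrable[OF finite_class.finite_UNIV Yind] Yint by blast
    have Eu: "expectation u = (\<Prod>i\<in>UNIV. expectation (Y i))" unfolding u_def
      using indep_vars_lebesgue_integral[OF finite_class.finite_UNIV Yind] Yint by blast
    also have "\<dots> \<le> (\<Prod>i\<in>UNIV. exp ((h * c$i)^2 * xi0 / 2))"
      by (intro prod_mono conjI integral_nonneg_AE AE_I2) (auto simp: Y_def Yeq mgf[OF hci])
    also have "\<dots> = exp (h^2 * s^2 * xi0 / 2)"
      by (simp add: exp_sum[symmetric] s_def sum_sq_norm[symmetric] power_mult_distrib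
          sum_divide_distrib[symmetric] sum_distrib_left[symmetric] sum_distrib_right[symmetric] algebra_simps)
    finally have Eu_le: "expectation u \<le> exp (h^2 * s^2 * xi0 / 2)" .
    have umeas: "u \<in> borel_measurable M" using uint by auto
    have sub: "{\<omega> \<in> space M. c \<bullet> (\<chi> i. eps i \<omega>) > t} \<subseteq> {\<omega> \<in> space M. u \<omega> \<ge> exp (h * t)}"
      using hpos by (auto simp: u_exp)
    have "measure M {\<omega> \<in> space M. c \<bullet> (\<chi> i. eps i \<omega>) > t} \<le> measure M {\<omega> \<in> space M. u \<omega> \<ge> exp (h * t)}"
      by (rule finite_measure_mono[OF sub]) (use umeas in measurable)
    also have "\<dots> \<le> expectation u / exp (h * t)"
      by (rule integral_Markov_inequality_measure[OF uint, where A="space M"]) (auto simp: u_def Y_def prod_nonneg)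
    also have "\<dots> \<le> exp (h^2 * s^2 * xi0 / 2) / exp (h * t)"
      by (intro divide_right_mono Eu_le) simp
    also have "\<dots> = exp (h^2 * s^2 * xi0 / 2 - h * t)" by (simp add: exp_diff)
    also have "\<dots> \<le> exp (L - 2 * L)"
    proof -
      have a: "h^2 * s^2 = 2 * L / \<nu>" using hs q2 by (metis power_mult_distrib)
      have "h^2 * s^2 * xi0 / 2 = L * xi0 / \<nu>" using a by simp
      also have "\<dots> \<le> L" using nuxi nupos Lpos xi0 by (simp add: field_simps)
      finally have b: "h^2 * s^2 * xi0 / 2 \<le> L" .
      have "h * t = q * sqrt (2 * \<nu> * L)" unfolding t_def using hs by (simp add: mult.assoc mult.commute mult.left_commute)
      also have "\<dots> = sqrt (2 * L / \<nu> * (2 * \<nu> * L))" unfolding q_def by (rule real_sqrt_mult[symmetric])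
      also have "2 * L / \<nu> * (2 * \<nu> * L) = (2 * L)^2" using nupos by (simp add: field_simps power2_eq_square)
      finally have "h * t = sqrt ((2 * L)^2)" .
      then have "h * t = \<bar>2 * L\<bar>" by (simp only: real_sqrt_abs)
      then have "h * t = 2 * L" using Lpos by simp
      then show ?thesis using b by simp
    qed
    also have "\<dots> = \<delta>" unfolding L_def using \<delta> by (simp add: ln_div)
    finally show ?thesis unfolding t_def s_def L_def \<nu>_def by simp
  qed
qed


lemma borel_measurable_vec_lambda:
  fixes f :: "'n::finite \<Rightarrow> 'a \<Rightarrow> 'b::euclidean_space"
  assumes "\<And>i. f i \<in> borel_measurable M"
  shows "(\<lambda>\<omega>. \<chi> i. f i \<omega>) \<in> borel_measurable M"
  by (subst borel_measurable_euclidean_space)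
     (auto simp: Basis_vec_def inner_axis intro!: borel_measurable_inner assms)

lemma borel_measurable_det:
  fixes F :: "'a \<Rightarrow> real^'n::finite^'n"
  assumes "\<And>i j. (\<lambda>\<omega>. F \<omega> $ i $ j) \<in> borel_measurable M"
  shows "(\<lambda>\<omega>. det (F \<omega>)) \<in> borel_measurable M"
  unfolding det_def using assms by measurable

definition cram :: "real^'n::finite^'n \<Rightarrow> real^'n \<Rightarrow> real^'n" where
  "cram A b = (\<chi> k. det (\<chi> i j. if j = k then b$i else A$i$j) / det A)"

lemma borel_measurable_cram:
  fixes F :: "'a \<Rightarrow> real^'n::finite^'n" and b :: "'a \<Rightarrow> real^'n"
  assumes "\<And>i j. (\<lambda>\<omega>. F \<omega> $ i $ j) \<in> borel_measurable M" "\<And>i. (\<lambda>\<omega>. b \<omega> $ i) \<in> borel_measurable M"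
  shows "(\<lambda>\<omega>. cram (F \<omega>) (b \<omega>) $ k) \<in> borel_measurable M"
proof -
  have "(\<lambda>\<omega>. det (\<chi> i j. if j = k then b \<omega> $ i else F \<omega> $ i $ j)) \<in> borel_measurable M"
    apply (rule borel_measurable_det)
    subgoal for i j by (cases "j = k") (simp_all add: assms)
    done
  moreover have "(\<lambda>\<omega>. det (F \<omega>)) \<in> borel_measurable M" by (rule borel_measurable_det[OF assms(1)])
  ultimately show ?thesis unfolding cram_def by simp
qed

lemma matrix_inv_cram:
  fixes A :: "real^'n::finite^'n"
  assumes "det A \<noteq> 0"
  shows "matrix_inv A *v b = cram A b"
proof -
  have inv: "invertible A" using assms invertible_det_nz by blast
  have "A ** matrix_inv A = mat 1"
  proof -
    have "\<exists>A'. A ** A' = mat 1 \<and> A' ** A = mat 1" using inv unfolding invertible_def .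
    then show ?thesis unfolding matrix_inv_def by (rule someI2_ex) blast
  qed
  then have "A *v (matrix_inv A *v b) = b" by (simp add: matrix_vector_mul_assoc)
  then show ?thesis using cramer[OF assms] unfolding cram_def by blast
qed

lemma indep_set_to_pair:
  fixes Xv :: "'a \<Rightarrow> 'b::topological_space" and Ev :: "'a \<Rightarrow> 'c::topological_space"
  assumes P: "prob_space M" and mX: "Xv \<in> borel_measurable M" and mE: "Ev \<in> borel_measurable M"
    and ind: "prob_space.indep_set M {Xv -` S \<inter> space M | S. S \<in> sets borel} {Ev -` S \<inter> space M | S. S \<in> sets borel}"
  shows "distr M borel Xv \<Otimes>\<^sub>M distr M borel Ev = distr M (borel \<Otimes>\<^sub>M borel) (\<lambda>x. (Xv x, Ev x))"
proof -
  interpret prob_space M by (rule P)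
  interpret PX: prob_space "distr M borel Xv" by (rule prob_space_distr[OF mX])
  interpret PE: prob_space "distr M borel Ev" by (rule prob_space_distr[OF mE])
  have pm: "(\<lambda>x. (Xv x, Ev x)) \<in> measurable M (borel \<Otimes>\<^sub>M borel)" using mX mE by measurable
  show ?thesis
  proof (rule pair_measure_eqI)
    show "sigma_finite_measure (distr M borel Xv)" "sigma_finite_measure (distr M borel Ev)"
      by (rule PX.sigma_finite_measure_axioms PE.sigma_finite_measure_axioms)+
    show "sets (distr M borel Xv \<Otimes>\<^sub>M distr M borel Ev) = sets (distr M (borel \<Otimes>\<^sub>M borel) (\<lambda>x. (Xv x, Ev x)))"
      by simp
  next
    fix A B assume A: "A \<in> sets (distr M borel Xv)" and B: "B \<in> sets (distr M borel Ev)"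
    then have A': "A \<in> sets borel" and B': "B \<in> sets borel" by auto
    have AB: "A \<times> B \<in> sets (borel \<Otimes>\<^sub>M borel)" using A' B' by auto
    have "emeasure (distr M (borel \<Otimes>\<^sub>M borel) (\<lambda>x. (Xv x, Ev x))) (A \<times> B)
        = emeasure M ((Xv -` A \<inter> space M) \<inter> (Ev -` B \<inter> space M))"
      by (subst emeasure_distr[OF pm AB]) (intro arg_cong[where f="emeasure M"], auto)
    also have "\<dots> = ennreal (prob ((Xv -` A \<inter> space M) \<inter> (Ev -` B \<inter> space M)))"
      by (simp add: emeasure_eq_measure)
    also have "prob ((Xv -` A \<inter> space M) \<inter> (Ev -` B \<inter> space M)) = prob (Xv -` A \<inter> space M) * prob (Ev -` B \<inter> space M)"
      by (rule indep_setD[OF ind]) (use A' B' in blast)+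
    also have "ennreal (prob (Xv -` A \<inter> space M) * prob (Ev -` B \<inter> space M))
        = emeasure (distr M borel Xv) A * emeasure (distr M borel Ev) B"
      using A' B' mX mE by (simp add: emeasure_distr emeasure_eq_measure ennreal_mult)
    finally show "emeasure (distr M borel Xv) A * emeasure (distr M borel Ev) B
        = emeasure (distr M (borel \<Otimes>\<^sub>M borel) (\<lambda>x. (Xv x, Ev x))) (A \<times> B)" by simp
  qed
qed

lemma indep_prob_bound:
  fixes Xv :: "'a \<Rightarrow> 'b::{second_countable_topology}" and Ev :: "'a \<Rightarrow> real^'n::finite"
    and cf :: "'b \<Rightarrow> real^'n"
  assumes P: "prob_space M" and rv: "Xv \<in> borel_measurable M" "Ev \<in> borel_measurable M"
    and eq: "distr M borel Xv \<Otimes>\<^sub>M distr M borel Ev = distr M (borel \<Otimes>\<^sub>M borel) (\<lambda>x. (Xv x, Ev x))"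
    and cf: "cf \<in> borel_measurable borel"
    and core: "\<And>c. measure M {\<omega> \<in> space M. c \<bullet> Ev \<omega> > r * norm c} \<le> \<delta>"
    and \<delta>: "0 \<le> \<delta>"
  shows "measure M {\<omega> \<in> space M. cf (Xv \<omega>) \<bullet> Ev \<omega> > r * norm (cf (Xv \<omega>))} \<le> \<delta>"
proof -
  interpret prob_space M by (rule P)
  interpret PX: prob_space "distr M borel Xv" by (rule prob_space_distr[OF rv(1)])
  interpret PE: prob_space "distr M borel Ev" by (rule prob_space_distr[OF rv(2)])
  define Pset where "Pset = {p \<in> space (borel \<Otimes>\<^sub>M borel). cf (fst p) \<bullet> (snd p::real^'n) > r * norm (cf (fst p::'b))}"
  have Pmeas: "Pset \<in> sets (borel \<Otimes>\<^sub>M borel)" unfolding Pset_def using cf by measurable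
  have pm: "(\<lambda>x. (Xv x, Ev x)) \<in> measurable M (borel \<Otimes>\<^sub>M borel)" using rv by measurable
  have "emeasure M {\<omega> \<in> space M. cf (Xv \<omega>) \<bullet> Ev \<omega> > r * norm (cf (Xv \<omega>))}
      = emeasure M ((\<lambda>x. (Xv x, Ev x)) -` Pset \<inter> space M)"
    by (intro arg_cong[where f="emeasure M"]) (auto simp: Pset_def space_pair_measure)
  also have "\<dots> = emeasure (distr M (borel \<Otimes>\<^sub>M borel) (\<lambda>x. (Xv x, Ev x))) Pset"
    by (rule emeasure_distr[symmetric, OF pm Pmeas])
  also have "\<dots> = emeasure (distr M borel Xv \<Otimes>\<^sub>M distr M borel Ev) Pset" by (simp add: eq)
  also have "\<dots> = \<integral>\<^sup>+ x. emeasure (distr M borel Ev) (Pair x -` Pset) \<partial>distr M borel Xv"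
    by (rule PE.emeasure_pair_measure_alt) (simp add: Pmeas)
  also have "\<dots> \<le> \<integral>\<^sup>+ x. ennreal \<delta> \<partial>distr M borel Xv"
  proof (rule nn_integral_mono)
    fix x
    have "Pair x -` Pset = {e. cf x \<bullet> e > r * norm (cf x)}"
      by (auto simp: Pset_def space_pair_measure)
    then have "emeasure (distr M borel Ev) (Pair x -` Pset)
        = emeasure M (Ev -` {e. cf x \<bullet> e > r * norm (cf x)} \<inter> space M)"
      by (simp add: emeasure_distr rv)
    also have "\<dots> = ennreal (measure M {\<omega> \<in> space M. cf x \<bullet> Ev \<omega> > r * norm (cf x)})"
      by (simp add: emeasure_eq_measure vimage_def Int_def conj_commute)
    also have "\<dots> \<le> ennreal \<delta>" using core[of "cf x"] by (simp add: ennreal_leI)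
    finally show "emeasure (distr M borel Ev) (Pair x -` Pset) \<le> ennreal \<delta>" .
  qed
  also have "\<dots> = ennreal \<delta>" using PX.emeasure_space_1 by simp
  finally show ?thesis using \<delta> by (simp add: emeasure_eq_measure)
qed


lemma borel_measurable_vec_comp:
  fixes g :: "'a \<Rightarrow> 'b::euclidean_space^'n::finite"
  assumes "\<And>i. (\<lambda>\<omega>. g \<omega> $ i) \<in> borel_measurable M"
  shows "g \<in> borel_measurable M"
  using borel_measurable_vec_lambda[of "\<lambda>i \<omega>. g \<omega> $ i", OF assms] by (simp add: vec_lambda_eta)

lemma meas_nth: "(\<lambda>x::'a::euclidean_space^'n::finite. x$i) \<in> borel_measurable borel"
  by (intro borel_measurable_continuous_onI continuous_intros)

lemma kmeas2:
  fixes k :: "'b::second_countable_topology \<Rightarrow> 'b \<Rightarrow> real"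
  assumes k: "(\<lambda>p. k (fst p) (snd p)) \<in> borel_measurable borel"
    and g1: "g1 \<in> borel_measurable M" and g2: "g2 \<in> borel_measurable M"
  shows "(\<lambda>\<omega>. k (g1 \<omega>) (g2 \<omega>)) \<in> borel_measurable M"
proof -
  have "(\<lambda>\<omega>. (g1 \<omega>, g2 \<omega>)) \<in> measurable M (borel \<Otimes>\<^sub>M borel)" using g1 g2 by measurable
  then have "(\<lambda>\<omega>. (g1 \<omega>, g2 \<omega>)) \<in> measurable M borel" by (simp add: borel_prod)
  from measurable_compose[OF this k] show ?thesis by simp
qed

lemma vec_add_eq: "(\<chi> i. a i + b i) = (\<chi> i. a i) + (\<chi> i. (b i :: real))"
  by (simp add: vec_eq_iff)

theorem theorem2:
  fixes M :: "'a measure"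
    and X :: "(real^'d) set"
    and k :: "real^'d \<Rightarrow> real^'d \<Rightarrow> real"
    and f :: "real^'d \<Rightarrow> real"
    and Xs :: "'n::finite \<Rightarrow> 'a \<Rightarrow> real^'d"
    and eps :: "'n \<Rightarrow> 'a \<Rightarrow> real"
    and B lam h0 xi0 \<delta> :: real
    and x :: "real^'d"
  assumes P: "prob_space M"
    and kernel: "pd_kernel X k"
    and k_meas: "(\<lambda>p. k (fst p) (snd p)) \<in> borel_measurable borel"
    and B: "B > 0"
    and f: "in_rkhs_ball X k f B"
    and lam: "lam > 0"
    and Xs_meas: "\<And>i. Xs i \<in> borel_measurable M"
    and Xs_in: "\<And>i \<omega>. \<omega> \<in> space M \<Longrightarrow> Xs i \<omega> \<in> X"
    and eps_meas: "\<And>i. eps i \<in> borel_measurable M"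
    and eps_indep: "prob_space.indep_vars M (\<lambda>_. borel) eps UNIV"
    and eps_ident: "\<And>i j. distr M borel (eps i) = distr M borel (eps j)"
    and eps_int: "\<And>i. integrable M (eps i)"
    and eps_mean: "\<And>i. prob_space.expectation M (eps i) = 0"
    and h0: "h0 > 0" and xi0: "xi0 > 0"
    and mgf_int: "\<And>i h. \<bar>h\<bar> \<le> h0 \<Longrightarrow> integrable M (\<lambda>\<omega>. exp (h * eps i \<omega>))"
    and mgf: "\<And>i h. \<bar>h\<bar> \<le> h0 \<Longrightarrow>
                prob_space.expectation M (\<lambda>\<omega>. exp (h * eps i \<omega>)) \<le> exp (h^2 * xi0 / 2)"
    and indep_XE: "prob_space.indep_set M
        {(\<lambda>\<omega>. \<chi> i. Xs i \<omega>) -` S \<inter> space M | S. S \<in> sets (borel :: ((real^'d)^'n) measure)}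
        {(\<lambda>\<omega>. \<chi> i. eps i \<omega>) -` S \<inter> space M | S. S \<in> sets (borel :: (real^'n) measure)}"
    and \<delta>: "0 < \<delta>" "\<delta> < 1"
    and x: "x \<in> X"
  shows "measure M {\<omega> \<in> space M.
            f x \<le> gp_mean k lam (\<lambda>i. Xs i \<omega>) (\<chi> i. f (Xs i \<omega>) + eps i \<omega>) x
                   + (B + conf_beta lam xi0 h0 \<delta>) * gp_sd k lam (\<lambda>i. Xs i \<omega>) x} \<ge> 1 - \<delta>
       \<and> measure M {\<omega> \<in> space M.
            f x \<ge> gp_mean k lam (\<lambda>i. Xs i \<omega>) (\<chi> i. f (Xs i \<omega>) + eps i \<omega>) x
                   - (B + conf_beta lam xi0 h0 \<delta>) * gp_sd k lam (\<lambda>i. Xs i \<omega>) x} \<ge> 1 - \<delta>"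
proof -
  interpret prob_space M by (rule P)
  define Xv where "Xv \<omega> = (\<chi> i. Xs i \<omega>)" for \<omega>
  define Ev where "Ev \<omega> = (\<chi> i. eps i \<omega>)" for \<omega>
  have Xv_fun: "Xv = (\<lambda>\<omega>. \<chi> i. Xs i \<omega>)" by (rule ext) (simp add: Xv_def)
  have Ev_fun: "Ev = (\<lambda>\<omega>. \<chi> i. eps i \<omega>)" by (rule ext) (simp add: Ev_def)
  define r where "r = sqrt (2 * max xi0 (2 * ln (1 / \<delta>) / h0^2) * ln (1 / \<delta>))"
  define \<beta> where "\<beta> = conf_beta lam xi0 h0 \<delta>"
  have r_eq: "lam * \<beta> = r" unfolding \<beta>_def conf_beta_def r_def using lam by simp
  have lnpos: "0 < ln (1 / \<delta>)" using \<delta> by simp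
  have mxpos: "0 < max xi0 (2 * ln (1 / \<delta>) / h0^2)" using xi0 by simp
  have \<beta>0: "0 \<le> \<beta>" unfolding \<beta>_def conf_beta_def using lam lnpos mxpos by simp
  define Acf where "Acf xv = gram k (\<lambda>i. xv$i) + (lam^2) *\<^sub>R mat 1" for xv :: "(real^'d)^'n"
  define cf where "cf xv = cram (Acf xv) (kvec k (\<lambda>i. xv$i) x)" for xv :: "(real^'d)^'n"
  have Xv_meas: "Xv \<in> borel_measurable M" unfolding Xv_def
    by (rule borel_measurable_vec_lambda) (rule Xs_meas)
  have Ev_meas: "Ev \<in> borel_measurable M" unfolding Ev_def
    by (rule borel_measurable_vec_lambda) (rule eps_meas)
  have cf_meas: "cf \<in> borel_measurable borel"
  proof (rule borel_measurable_vec_comp)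
    fix j
    show "(\<lambda>xv. cf xv $ j) \<in> borel_measurable borel"
      unfolding cf_def
    proof (rule borel_measurable_cram)
      fix i l
      show "(\<lambda>xv. Acf xv $ i $ l) \<in> borel_measurable borel"
        unfolding Acf_def gram_def by (simp, intro borel_measurable_add kmeas2[OF k_meas meas_nth meas_nth] borel_measurable_const)
      show "(\<lambda>xv. kvec k (\<lambda>i. xv $ i) x $ i) \<in> borel_measurable borel"
        unfolding kvec_def using kmeas2[OF k_meas borel_measurable_const meas_nth] by simp
    qed
  qed
  have fX_meas: "(\<lambda>\<omega>. f (Xs i \<omega>)) \<in> borel_measurable M" for i
  proof -
    obtain \<alpha> where lim: "\<And>y. y \<in> X \<Longrightarrow> (\<lambda>j. pre_fun k (\<alpha> j) y) \<longlonglongrightarrow> f y"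
      using f unfolding in_rkhs_ball_def by blast
    show ?thesis
    proof (rule borel_measurable_LIMSEQ_real)
      show "(\<lambda>j. pre_fun k (\<alpha> j) (Xs i \<omega>)) \<longlonglongrightarrow> f (Xs i \<omega>)" if "\<omega> \<in> space M" for \<omega>
        using lim Xs_in[OF that] by blast
      show "(\<lambda>\<omega>. pre_fun k (\<alpha> j) (Xs i \<omega>)) \<in> borel_measurable M" for j
        unfolding pre_fun_def
        by (intro borel_measurable_sum borel_measurable_times borel_measurable_const
              kmeas2[OF k_meas borel_measurable_const Xs_meas])
    qed
  qed
  have XnX: "\<And>i. Xs i \<omega> \<in> X" if "\<omega> \<in> space M" for \<omega> using Xs_in that by blast
  have det_ok: "det (gram k (\<lambda>i. Xs i \<omega>) + lam^2 *\<^sub>R mat 1) \<noteq> 0" if "\<omega> \<in> space M" for \<omega>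
    using AA_det[OF kernel XnX[OF that] x lam] by (simp only: AA_def[OF kernel XnX[OF that] x lam])
  have Xv_i: "(\<lambda>i. Xv \<omega> $ i) = (\<lambda>i. Xs i \<omega>)" for \<omega> unfolding Xv_def by simp
  have a_cf: "aa k lam (\<lambda>i. Xs i \<omega>) x = cf (Xv \<omega>)" if "\<omega> \<in> space M" for \<omega>
    unfolding aa_def[OF kernel XnX[OF that] x lam] cf_def Acf_def Xv_i
      AA_def[OF kernel XnX[OF that] x lam] kv_def[OF kernel XnX[OF that] x lam]
    by (rule matrix_inv_cram) (rule det_ok[OF that])
  define mf where "mf \<omega> = cf (Xv \<omega>) \<bullet> (\<chi> i. f (Xs i \<omega>))" for \<omega>
  define sd where "sd \<omega> = gp_sd k lam (\<lambda>i. Xs i \<omega>) x" for \<omega>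
  define mean where "mean \<omega> = gp_mean k lam (\<lambda>i. Xs i \<omega>) (\<chi> i. f (Xs i \<omega>) + eps i \<omega>) x" for \<omega>
  have D1: "mean \<omega> = mf \<omega> + cf (Xv \<omega>) \<bullet> Ev \<omega>" if "\<omega> \<in> space M" for \<omega>
  proof -
    have "mean \<omega> = kv k (\<lambda>i. Xs i \<omega>) x \<bullet> (matrix_inv (AA k lam (\<lambda>i. Xs i \<omega>)) *v ((\<chi> i. f (Xs i \<omega>)) + Ev \<omega>))"
      unfolding mean_def gp_mean_def AA_def[OF kernel XnX[OF that] x lam] kv_def[OF kernel XnX[OF that] x lam] Ev_def
      by (simp only: vec_add_eq)
    also have "\<dots> = cf (Xv \<omega>) \<bullet> ((\<chi> i. f (Xs i \<omega>)) + Ev \<omega>)"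
      unfolding mean_lin[OF kernel XnX[OF that] x lam] a_cf[OF that] ..
    finally show ?thesis unfolding mf_def by (simp add: inner_add_right)
  qed
  have D2: "\<bar>f x - mf \<omega>\<bar> \<le> B * sd \<omega>" and D3: "lam * norm (cf (Xv \<omega>)) \<le> sd \<omega>" if "\<omega> \<in> space M" for \<omega>
  proof -
    let ?a = "aa k lam (\<lambda>i. Xs i \<omega>) x"
    have ve: "gp_var k lam (\<lambda>i. Xs i \<omega>) x = Qf k x (\<lambda>i. ?a$i) (\<lambda>i. Xs i \<omega>) UNIV + lam^2 * (?a \<bullet> ?a)"
      by (rule var_eq[OF kernel XnX[OF that] x lam])
    have rb: "\<bar>f x - (\<Sum>i\<in>UNIV. ?a$i * f (Xs i \<omega>))\<bar> \<le> B * sqrt (Qf k x (\<lambda>i. ?a$i) (\<lambda>i. Xs i \<omega>) UNIV)"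
      and Q0: "0 \<le> Qf k x (\<lambda>i. ?a$i) (\<lambda>i. Xs i \<omega>) UNIV"
      using rkhs_bound[OF kernel f x, of UNIV "\<lambda>i. Xs i \<omega>" "\<lambda>i. ?a$i"] XnX[OF that] by auto
    have aa0: "0 \<le> lam^2 * (?a \<bullet> ?a)" by simp
    have "sqrt (Qf k x (\<lambda>i. ?a$i) (\<lambda>i. Xs i \<omega>) UNIV) \<le> sd \<omega>"
      unfolding sd_def gp_sd_def ve using aa0 by simp
    then have "B * sqrt (Qf k x (\<lambda>i. ?a$i) (\<lambda>i. Xs i \<omega>) UNIV) \<le> B * sd \<omega>"
      using B by simp
    moreover have "mf \<omega> = (\<Sum>i\<in>UNIV. ?a$i * f (Xs i \<omega>))"
      unfolding mf_def a_cf[OF that, symmetric] by (simp add: inner_real_vec)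
    ultimately show "\<bar>f x - mf \<omega>\<bar> \<le> B * sd \<omega>" using rb by simp
    have "sqrt (lam^2 * (?a \<bullet> ?a)) \<le> sd \<omega>"
      unfolding sd_def gp_sd_def ve using Q0 by simp
    moreover have "sqrt (lam^2 * (?a \<bullet> ?a)) = lam * norm ?a"
      using lam by (simp add: real_sqrt_mult norm_eq_sqrt_inner)
    ultimately show "lam * norm (cf (Xv \<omega>)) \<le> sd \<omega>" unfolding a_cf[OF that] by simp
  qed
  have Acf_ent: "(\<lambda>\<omega>. Acf (Xv \<omega>) $ i $ j) \<in> borel_measurable M" for i j
    unfolding Acf_def gram_def Xv_def by (simp, intro borel_measurable_add kmeas2[OF k_meas Xs_meas Xs_meas] borel_measurable_const)
  have kv_ent: "(\<lambda>\<omega>. kvec k (\<lambda>i. Xv \<omega> $ i) x $ i) \<in> borel_measurable M" for i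
    unfolding kvec_def Xv_def using kmeas2[OF k_meas borel_measurable_const Xs_meas] by simp
  define Yv where "Yv \<omega> = (\<chi> i. f (Xs i \<omega>) + eps i \<omega>)" for \<omega>
  have Yv_ent: "(\<lambda>\<omega>. Yv \<omega> $ i) \<in> borel_measurable M" for i
    unfolding Yv_def using fX_meas eps_meas by simp
  have mean_alt: "mean \<omega> = kvec k (\<lambda>i. Xv \<omega> $ i) x \<bullet> cram (Acf (Xv \<omega>)) (Yv \<omega>)" if "\<omega> \<in> space M" for \<omega>
    unfolding mean_def gp_mean_def Xv_i Acf_def Yv_def
    by (subst matrix_inv_cram) (simp_all add: det_ok[OF that])
  have sd_alt: "sd \<omega> = sqrt (k x x - kvec k (\<lambda>i. Xv \<omega> $ i) x \<bullet> cf (Xv \<omega>))" if "\<omega> \<in> space M" for \<omega>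
    unfolding sd_def gp_sd_def gp_var_def Xv_i cf_def Acf_def
    by (subst matrix_inv_cram) (simp_all add: det_ok[OF that])
  have mean_meas: "mean \<in> borel_measurable M"
  proof -
    have "(\<lambda>\<omega>. kvec k (\<lambda>i. Xv \<omega> $ i) x \<bullet> cram (Acf (Xv \<omega>)) (Yv \<omega>)) \<in> borel_measurable M"
      unfolding inner_real_vec
      by (intro borel_measurable_sum borel_measurable_times kv_ent borel_measurable_cram Acf_ent Yv_ent)
    then show ?thesis using mean_alt measurable_cong by (smt (verit))
  qed
  have cfX_meas: "(\<lambda>\<omega>. cf (Xv \<omega>)) \<in> borel_measurable M"
    using measurable_compose[OF Xv_meas cf_meas] .
  have cfX_ent: "(\<lambda>\<omega>. cf (Xv \<omega>) $ i) \<in> borel_measurable M" for i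
    using measurable_compose[OF cfX_meas meas_nth] .
  have sd_meas: "sd \<in> borel_measurable M"
  proof -
    have "(\<lambda>\<omega>. sqrt (k x x - kvec k (\<lambda>i. Xv \<omega> $ i) x \<bullet> cf (Xv \<omega>))) \<in> borel_measurable M"
      unfolding inner_real_vec
      by (intro measurable_compose[OF _ borel_measurable_continuous_onI[OF continuous_on_real_sqrt]]
            borel_measurable_diff borel_measurable_const borel_measurable_sum
            borel_measurable_times kv_ent cfX_ent continuous_on_id)
    then show ?thesis using sd_alt measurable_cong by (smt (verit))
  qed
  have eq: "distr M borel Xv \<Otimes>\<^sub>M distr M borel Ev = distr M (borel \<Otimes>\<^sub>M borel) (\<lambda>\<omega>. (Xv \<omega>, Ev \<omega>))"
    by (rule indep_set_to_pair[OF P Xv_meas Ev_meas]) (unfold Xv_fun Ev_fun, rule indep_XE)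
  have core: "measure M {\<omega> \<in> space M. c \<bullet> Ev \<omega> > r * norm c} \<le> \<delta>" for c
    unfolding Ev_def r_def
    by (rule chernoff_core[OF P eps_meas eps_indep h0 xi0 mgf_int mgf \<delta>])
  have bad_bound: "measure M {\<omega> \<in> space M. g (Xv \<omega>) \<bullet> Ev \<omega> > r * norm (g (Xv \<omega>))} \<le> \<delta>"
    if "g \<in> borel_measurable borel" for g
    by (rule indep_prob_bound[OF P Xv_meas Ev_meas eq that core]) (use \<delta> in simp)
  define bad1 where "bad1 = {\<omega> \<in> space M. (- cf (Xv \<omega>)) \<bullet> Ev \<omega> > r * norm (- cf (Xv \<omega>))}"
  define bad2 where "bad2 = {\<omega> \<in> space M. cf (Xv \<omega>) \<bullet> Ev \<omega> > r * norm (cf (Xv \<omega>))}"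
  have b1: "measure M bad1 \<le> \<delta>" unfolding bad1_def
    by (rule bad_bound[of "\<lambda>xv. - cf xv"]) (use cf_meas in measurable)
  have b2: "measure M bad2 \<le> \<delta>" unfolding bad2_def by (rule bad_bound[OF cf_meas])
  have bad1_ev: "bad1 \<in> events" unfolding bad1_def using cfX_meas Ev_meas by measurable
  have bad2_ev: "bad2 \<in> events" unfolding bad2_def using cfX_meas Ev_meas by measurable
  define G1 where "G1 = {\<omega> \<in> space M. f x \<le> mean \<omega> + (B + \<beta>) * sd \<omega>}"
  define G2 where "G2 = {\<omega> \<in> space M. f x \<ge> mean \<omega> - (B + \<beta>) * sd \<omega>}"
  have G1_ev: "G1 \<in> events" unfolding G1_def using mean_meas sd_meas by measurable
  have G2_ev: "G2 \<in> events" unfolding G2_def using mean_meas sd_meas by measurable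
  have sub1: "space M - bad1 \<subseteq> G1"
  proof
    fix \<omega> assume w: "\<omega> \<in> space M - bad1"
    then have sp: "\<omega> \<in> space M" by simp
    have "- (cf (Xv \<omega>) \<bullet> Ev \<omega>) \<le> r * norm (cf (Xv \<omega>))" using w unfolding bad1_def by auto
    also have "\<dots> = \<beta> * (lam * norm (cf (Xv \<omega>)))" using r_eq by (simp add: algebra_simps)
    also have "\<dots> \<le> \<beta> * sd \<omega>" using D3[OF sp] \<beta>0 by (rule mult_left_mono)
    finally have e: "- (cf (Xv \<omega>) \<bullet> Ev \<omega>) \<le> \<beta> * sd \<omega>" .
    have "f x \<le> mf \<omega> + B * sd \<omega>" using D2[OF sp] by linarith
    then have "f x \<le> mean \<omega> + (B + \<beta>) * sd \<omega>" using D1[OF sp] e by (simp add: algebra_simps)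
    then show "\<omega> \<in> G1" unfolding G1_def using sp by simp
  qed
  have sub2: "space M - bad2 \<subseteq> G2"
  proof
    fix \<omega> assume w: "\<omega> \<in> space M - bad2"
    then have sp: "\<omega> \<in> space M" by simp
    have "cf (Xv \<omega>) \<bullet> Ev \<omega> \<le> r * norm (cf (Xv \<omega>))" using w unfolding bad2_def by auto
    also have "\<dots> = \<beta> * (lam * norm (cf (Xv \<omega>)))" using r_eq by (simp add: algebra_simps)
    also have "\<dots> \<le> \<beta> * sd \<omega>" using D3[OF sp] \<beta>0 by (rule mult_left_mono)
    finally have e: "cf (Xv \<omega>) \<bullet> Ev \<omega> \<le> \<beta> * sd \<omega>" .
    have "mf \<omega> - B * sd \<omega> \<le> f x" using D2[OF sp] by linarith
    then have "mean \<omega> - (B + \<beta>) * sd \<omega> \<le> f x" using D1[OF sp] e by (simp add: algebra_simps)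
    then show "\<omega> \<in> G2" unfolding G2_def using sp by simp
  qed
  have "1 - \<delta> \<le> measure M G1"
  proof -
    have "1 - \<delta> \<le> measure M (space M - bad1)" using prob_compl[OF bad1_ev] b1 by simp
    also have "\<dots> \<le> measure M G1" by (rule finite_measure_mono[OF sub1 G1_ev])
    finally show ?thesis .
  qed
  moreover have "1 - \<delta> \<le> measure M G2"
  proof -
    have "1 - \<delta> \<le> measure M (space M - bad2)" using prob_compl[OF bad2_ev] b2 by simp
    also have "\<dots> \<le> measure M G2" by (rule finite_measure_mono[OF sub2 G2_ev])
    finally show ?thesis .
  qed
  ultimately show ?thesis unfolding G1_def G2_def mean_def sd_def \<beta>_def by simp
qed

end
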